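(* Let $G$ be a finite quasiprimitive permutation group of O'Nan–Scott type $\mathrm{SD}$ or $\mathrm{CD}$, and let $M$ be a point stabilizer. Then $M$ is a perfect code of $G$.
   Context: A permutation group is quasiprimitive if every non-trivial normal subgroup is transitive; the types $\mathrm{SD}$ (simple diagonal) and $\mathrm{CD}$ (compound diagonal) are those of Praeger's O'Nan–Scott classification of quasiprimitive groups (1997). For a group $G$ with identity $e$ and an inverse-closed subset $S\subseteq G\setminus\{e\}$, the Cayley graph $\mathrm{Cay}(G,S)$ has vertex set $G$ and edges $\{g,sg\}$ for $s\in S$, $g\in G$. A perfect code in a graph is an independent set $C$ of vertices such that every vertex outside $C$ is adjacent to exactly one vertex of $C$. A subgroup $H$ of $G$ is a perfect code of $G$ if some Cayley graph of $G$ admits $H$ as a perfect code. *)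

theory Defs
  imports "HOL-Algebra.Algebra"
begin

definition cayley_adj :: "('a, 'b) monoid_scheme \<Rightarrow> 'a set \<Rightarrow> 'a \<Rightarrow> 'a \<Rightarrow> bool" where
  "cayley_adj G S x y \<longleftrightarrow>
     x \<in> carrier G \<and> y \<in> carrier G \<and>
     ((\<exists>s\<in>S. y = s \<otimes>\<^bsub>G\<^esub> x) \<or> (\<exists>s\<in>S. x = s \<otimes>\<^bsub>G\<^esub> y))"

definition perfect_code_graph :: "'a set \<Rightarrow> ('a \<Rightarrow> 'a \<Rightarrow> bool) \<Rightarrow> 'a set \<Rightarrow> bool" where
  "perfect_code_graph V adj C \<longleftrightarrow>
     C \<subseteq> V \<and>
     (\<forall>x\<in>C. \<forall>y\<in>C. \<not> adj x y) \<and>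
     (\<forall>v\<in>V - C. \<exists>!c. c \<in> C \<and> adj v c)"

definition subgroup_perfect_code :: "('a, 'b) monoid_scheme \<Rightarrow> 'a set \<Rightarrow> bool" where
  "subgroup_perfect_code G H \<longleftrightarrow>
     subgroup H G \<and>
     (\<exists>S. S \<subseteq> carrier G - {\<one>\<^bsub>G\<^esub>} \<and> (\<forall>s\<in>S. inv\<^bsub>G\<^esub> s \<in> S) \<and>
          perfect_code_graph (carrier G) (cayley_adj G S) H)"

definition quasiprimitive :: "('a, 'b) monoid_scheme \<Rightarrow> 'c set \<Rightarrow> ('a \<Rightarrow> 'c \<Rightarrow> 'c) \<Rightarrow> bool" where
  "quasiprimitive G \<Omega> \<phi> \<longleftrightarrow>
     (\<forall>N. N \<lhd> G \<and> N \<noteq> {\<one>\<^bsub>G\<^esub>} \<longrightarrow> (\<forall>x\<in>\<Omega>. \<forall>y\<in>\<Omega>. \<exists>g\<in>N. \<phi> g x = y))"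

definition minimal_normal :: "('a, 'b) monoid_scheme \<Rightarrow> 'a set \<Rightarrow> bool" where
  "minimal_normal G N \<longleftrightarrow>
     N \<lhd> G \<and> N \<noteq> {\<one>\<^bsub>G\<^esub>} \<and>
     (\<forall>K. K \<lhd> G \<and> K \<subseteq> N \<longrightarrow> K = {\<one>\<^bsub>G\<^esub>} \<or> K = N)"

definition socle :: "('a, 'b) monoid_scheme \<Rightarrow> 'a set" where
  "socle G = generate G (\<Union>{N. minimal_normal G N})"

definition nonabelian_simple_subgroup :: "('a, 'b) monoid_scheme \<Rightarrow> 'a set \<Rightarrow> bool" where
  "nonabelian_simple_subgroup G T \<longleftrightarrow>
     subgroup T G \<and> simple_group (G\<lparr>carrier := T\<rparr>) \<and>
     (\<exists>x\<in>T. \<exists>y\<in>T. x \<otimes>\<^bsub>G\<^esub> y \<noteq> y \<otimes>\<^bsub>G\<^esub> x)"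

definition prod_of :: "('a, 'b) monoid_scheme \<Rightarrow> ('i \<Rightarrow> 'a set) \<Rightarrow> 'i set \<Rightarrow> 'a set" where
  "prod_of G T I = generate G (\<Union>i\<in>I. T i)"

definition internal_dir_prod :: "('a, 'b) monoid_scheme \<Rightarrow> ('i \<Rightarrow> 'a set) \<Rightarrow> 'i set \<Rightarrow> 'a set \<Rightarrow> bool" where
  "internal_dir_prod G T I N \<longleftrightarrow>
     (\<forall>i\<in>I. subgroup (T i) G) \<and>
     (\<forall>i\<in>I. \<forall>j\<in>I. i \<noteq> j \<longrightarrow> (\<forall>x\<in>T i. \<forall>y\<in>T j. x \<otimes>\<^bsub>G\<^esub> y = y \<otimes>\<^bsub>G\<^esub> x)) \<and>
     (\<forall>i\<in>I. T i \<inter> prod_of G T (I - {i}) = {\<one>\<^bsub>G\<^esub>}) \<and>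
     N = prod_of G T I"

text \<open>D is a full diagonal subgroup of the direct product of the T i, i in B:
  every coordinate projection restricted to D is an isomorphism onto its factor.
  The kernel of the projection onto T i is the product of the other factors, so
  injectivity means trivial intersection with it and surjectivity means that D
  together with it generates (as a product set) the whole product.\<close>
definition full_diagonal :: "('a, 'b) monoid_scheme \<Rightarrow> ('i \<Rightarrow> 'a set) \<Rightarrow> 'i set \<Rightarrow> 'a set \<Rightarrow> bool" where
  "full_diagonal G T B D \<longleftrightarrow>
     subgroup D G \<and> D \<subseteq> prod_of G T B \<and>
     (\<forall>i\<in>B. D \<inter> prod_of G T (B - {i}) = {\<one>\<^bsub>G\<^esub>} \<and>
             D <#>\<^bsub>G\<^esub> prod_of G T (B - {i}) = prod_of G T B)"

definition type_SD :: "('a, 'b) monoid_scheme \<Rightarrow> 'c set \<Rightarrow> ('a \<Rightarrow> 'c \<Rightarrow> 'c) \<Rightarrow> bool" where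
  "type_SD G \<Omega> \<phi> \<longleftrightarrow>
     (\<exists>k::nat. \<exists>T. k \<ge> 2 \<and>
        (\<forall>i<k. nonabelian_simple_subgroup G (T i)) \<and>
        internal_dir_prod G T {..<k} (socle G) \<and>
        (\<forall>\<alpha>\<in>\<Omega>. full_diagonal G T {..<k} (socle G \<inter> stabilizer G \<phi> \<alpha>)))"

definition type_CD :: "('a, 'b) monoid_scheme \<Rightarrow> 'c set \<Rightarrow> ('a \<Rightarrow> 'c \<Rightarrow> 'c) \<Rightarrow> bool" where
  "type_CD G \<Omega> \<phi> \<longleftrightarrow>
     (\<exists>k::nat. \<exists>T.
        (\<forall>i<k. nonabelian_simple_subgroup G (T i)) \<and>
        internal_dir_prod G T {..<k} (socle G) \<and>
        (\<forall>\<alpha>\<in>\<Omega>. \<exists>l::nat. \<exists>B::nat \<Rightarrow> nat set. \<exists>D::nat \<Rightarrow> 'a set.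
            l \<ge> 2 \<and> l dvd k \<and> k div l \<ge> 2 \<and>
            (\<forall>j<l. B j \<subseteq> {..<k} \<and> card (B j) = k div l) \<and>
            (\<forall>j<l. \<forall>j'<l. j \<noteq> j' \<longrightarrow> B j \<inter> B j' = {}) \<and>
            (\<Union>j<l. B j) = {..<k} \<and>
            (\<forall>j<l. full_diagonal G T (B j) (D j)) \<and>
            socle G \<inter> stabilizer G \<phi> \<alpha> = prod_of G D {..<l}))"

end

theory Submission
  imports Defs
begin


lemma set_multI: "a \<in> A \<Longrightarrow> b \<in> B \<Longrightarrow> a \<otimes>\<^bsub>G\<^esub> b \<in> A <#>\<^bsub>G\<^esub> B"
  unfolding set_mult_def by blast

lemma set_multE: "x \<in> A <#>\<^bsub>G\<^esub> B \<Longrightarrow> (\<And>a b. a \<in> A \<Longrightarrow> b \<in> B \<Longrightarrow> x = a \<otimes>\<^bsub>G\<^esub> b \<Longrightarrow> P) \<Longrightarrow> P"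
  unfolding set_mult_def by blast

context group
begin

lemma comm_single:
  assumes A: "A \<subseteq> carrier G" and y: "y \<in> carrier G"
    and c: "\<forall>a\<in>A. a \<otimes> y = y \<otimes> a" and x: "x \<in> generate G A"
  shows "x \<otimes> y = y \<otimes> x"
  using x
proof (induction rule: generate.induct)
  case one then show ?case using y by simp
next
  case (incl h) then show ?case using c by blast
next
  case (inv h)
  then have h: "h \<in> carrier G" and e: "h \<otimes> y = y \<otimes> h" using A c by auto
  have "inv h \<otimes> y = inv h \<otimes> y \<otimes> (h \<otimes> inv h)" using h y by simp
  also have "\<dots> = inv h \<otimes> (y \<otimes> h) \<otimes> inv h" using h y by (simp add: m_assoc)
  also have "\<dots> = inv h \<otimes> (h \<otimes> y) \<otimes> inv h" using e by simp
  also have "\<dots> = (inv h \<otimes> h) \<otimes> y \<otimes> inv h" using h y by (simp only: m_assoc inv_closed m_closed)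
  also have "\<dots> = y \<otimes> inv h" using h y by (simp only: l_inv l_one inv_closed m_closed)
  finally show ?case .
next
  case (eng h1 h2)
  have c1: "h1 \<in> carrier G" "h2 \<in> carrier G"
    using eng(1,2) generate_in_carrier[OF A] by auto
  have "h1 \<otimes> h2 \<otimes> y = h1 \<otimes> (h2 \<otimes> y)" using c1 y by (simp add: m_assoc)
  also have "\<dots> = h1 \<otimes> (y \<otimes> h2)" using eng(4) by simp
  also have "\<dots> = (h1 \<otimes> y) \<otimes> h2" using c1 y by (simp only: m_assoc)
  also have "\<dots> = (y \<otimes> h1) \<otimes> h2" using eng(3) by simp
  also have "\<dots> = y \<otimes> (h1 \<otimes> h2)" using c1 y by (simp only: m_assoc)
  finally show ?case .
qed

lemma gen_commute:
  assumes A: "A \<subseteq> carrier G" and B: "B \<subseteq> carrier G"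
    and c: "\<forall>a\<in>A. \<forall>b\<in>B. a \<otimes> b = b \<otimes> a"
    and x: "x \<in> generate G A" and y: "y \<in> generate G B"
  shows "x \<otimes> y = y \<otimes> x"
proof -
  have "\<forall>b\<in>B. x \<otimes> b = b \<otimes> x"
    using comm_single[OF A _ _ x] c B by blast
  then have "\<forall>b\<in>B. b \<otimes> x = x \<otimes> b" by simp
  from comm_single[OF B generate_in_carrier[OF A x] this y] show ?thesis by simp
qed

lemma generate_subgroup_eq:
  assumes "subgroup H G" shows "generate G H = H"
  using generate_subgroup_incl[OF _ assms] generate.incl[of _ H G] by blast

lemma generate_union_gen:
  assumes U: "U \<subseteq> carrier G" and V: "V \<subseteq> carrier G"
  shows "generate G (U \<union> generate G V) = generate G (U \<union> V)"
proof
  have "U \<union> generate G V \<subseteq> generate G (U \<union> V)"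
    using mono_generate[of V "U \<union> V"] generate.incl[of _ "U \<union> V" G] by blast
  then show "generate G (U \<union> generate G V) \<subseteq> generate G (U \<union> V)"
    using generate_subgroup_incl[OF _ generate_is_subgroup[OF Un_least[OF U V]]] by blast
next
  show "generate G (U \<union> V) \<subseteq> generate G (U \<union> generate G V)"
  proof (rule mono_generate)
    show "U \<union> V \<subseteq> U \<union> generate G V" using generate.incl[of _ V G] by blast
  qed
qed

lemma gen_union_commute:
  assumes A: "subgroup A G" and B: "subgroup B G"
    and c: "\<forall>a\<in>A. \<forall>b\<in>B. a \<otimes> b = b \<otimes> a"
  shows "generate G (A \<union> B) = A <#> B"
proof
  have Ac: "A \<subseteq> carrier G" and Bc: "B \<subseteq> carrier G" using A B subgroup.subset by auto
  have sg: "subgroup (A <#> B) G"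
  proof (rule subgroupI)
    show "A <#> B \<subseteq> carrier G" using Ac Bc unfolding set_mult_def by auto
    show "A <#> B \<noteq> {}" using A B subgroup.one_closed unfolding set_mult_def by blast
  next
    fix x assume "x \<in> A <#> B"
    then obtain a b where ab: "a \<in> A" "b \<in> B" "x = a \<otimes> b" unfolding set_mult_def by blast
    have ca: "a \<in> carrier G" "b \<in> carrier G" using ab Ac Bc by auto
    have "inv x = inv b \<otimes> inv a" using ab ca by (simp add: inv_mult_group)
    also have "\<dots> = inv a \<otimes> inv b"
      using c[rule_format, OF subgroup.m_inv_closed[OF A ab(1)] subgroup.m_inv_closed[OF B ab(2)]] by (rule sym)
    finally show "inv x \<in> A <#> B"
      using set_multI[where G=G, OF subgroup.m_inv_closed[OF A ab(1)] subgroup.m_inv_closed[OF B ab(2)]] by simp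
  next
    fix x y assume "x \<in> A <#> B" "y \<in> A <#> B"
    then obtain a b a' b' where ab: "a \<in> A" "b \<in> B" "x = a \<otimes> b" "a' \<in> A" "b' \<in> B" "y = a' \<otimes> b'"
      unfolding set_mult_def by blast
    have ca: "a \<in> carrier G" "b \<in> carrier G" "a' \<in> carrier G" "b' \<in> carrier G" using ab Ac Bc by auto
    have "x \<otimes> y = a \<otimes> (b \<otimes> a') \<otimes> b'" using ab ca by (simp add: m_assoc)
    also have "\<dots> = a \<otimes> (a' \<otimes> b) \<otimes> b'" using c[rule_format, OF ab(4) ab(2)] by (simp only:)
    also have "\<dots> = (a \<otimes> a') \<otimes> (b \<otimes> b')" using ca by (simp add: m_assoc)
    finally show "x \<otimes> y \<in> A <#> B"
      using set_multI[where G=G, OF subgroup.m_closed[OF A ab(1,4)] subgroup.m_closed[OF B ab(2,5)]] by simp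
  qed
  have "A \<union> B \<subseteq> A <#> B"
  proof
    fix x assume "x \<in> A \<union> B"
    then show "x \<in> A <#> B"
    proof
      assume "x \<in> A" then have "x = x \<otimes> \<one>" "x \<in> carrier G" using Ac by auto
      then show ?thesis using set_multI[where G=G, OF \<open>x \<in> A\<close> subgroup.one_closed[OF B]] by simp
    next
      assume "x \<in> B" then have "x = \<one> \<otimes> x" "x \<in> carrier G" using Bc by auto
      then show ?thesis using set_multI[where G=G, OF subgroup.one_closed[OF A] \<open>x \<in> B\<close>] by simp
    qed
  qed
  then show "generate G (A \<union> B) \<subseteq> A <#> B" using generate_subgroup_incl sg by blast
next
  show "A <#> B \<subseteq> generate G (A \<union> B)"
  proof
    fix x assume "x \<in> A <#> B"
    then obtain a b where "a \<in> A" "b \<in> B" "x = a \<otimes> b" by (rule set_multE)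
    then show "x \<in> generate G (A \<union> B)"
      using generate.eng[of a G "A \<union> B" b] generate.incl[of a "A \<union> B" G] generate.incl[of b "A \<union> B" G] by blast
  qed
qed

end



context group
begin

lemma prod_of_subgroup:
  assumes "\<forall>j\<in>J. subgroup (W j) G" shows "subgroup (prod_of G W J) G"
  unfolding prod_of_def using assms subgroup.subset by (intro generate_is_subgroup) blast

lemma prod_of_carrier:
  assumes "\<forall>j\<in>J. subgroup (W j) G" shows "prod_of G W J \<subseteq> carrier G"
  using prod_of_subgroup[OF assms] subgroup.subset by blast

lemma prod_of_incl: "j \<in> J \<Longrightarrow> W j \<subseteq> prod_of G W J"
  unfolding prod_of_def using generate.incl[of _ "\<Union>j\<in>J. W j" G] by blast

lemma prod_of_mono: "J \<subseteq> J' \<Longrightarrow> prod_of G W J \<subseteq> prod_of G W J'"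
  unfolding prod_of_def by (rule mono_generate) blast

lemma prod_of_mono2: "\<forall>j\<in>J. W j \<subseteq> Y j \<Longrightarrow> prod_of G W J \<subseteq> prod_of G Y J"
  unfolding prod_of_def by (rule mono_generate) blast

lemma prod_of_empty: "prod_of G W {} = {\<one>}"
proof -
  have "generate G {} \<subseteq> {\<one>}"
    by (rule generate_subgroup_incl) (auto intro: triv_subgroup)
  then show ?thesis unfolding prod_of_def using generate.one[of G "{}"] by auto
qed

lemma prod_of_one: "\<one> \<in> prod_of G W J"
  unfolding prod_of_def by (rule generate.one)

lemma prod_of_insert:
  assumes sg: "\<forall>j\<in>insert a J. subgroup (W j) G"
    and cm: "\<forall>j\<in>J. \<forall>x\<in>W a. \<forall>y\<in>W j. x \<otimes> y = y \<otimes> x"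
  shows "prod_of G W (insert a J) = W a <#> prod_of G W J"
proof -
  have U: "(\<Union>j\<in>J. W j) \<subseteq> carrier G" using sg subgroup.subset by blast
  have Xa: "W a \<subseteq> carrier G" using sg subgroup.subset by blast
  have "prod_of G W (insert a J) = generate G (W a \<union> (\<Union>j\<in>J. W j))"
    unfolding prod_of_def by simp
  also have "\<dots> = generate G (W a \<union> prod_of G W J)"
    unfolding prod_of_def using generate_union_gen[OF Xa U] by simp
  also have "\<dots> = W a <#> prod_of G W J"
  proof (rule gen_union_commute)
    show "subgroup (W a) G" using sg by blast
    show "subgroup (prod_of G W J) G" using sg by (intro prod_of_subgroup) blast
    show "\<forall>x\<in>W a. \<forall>y\<in>prod_of G W J. x \<otimes> y = y \<otimes> x"
    proof (intro ballI)
      fix x y assume x: "x \<in> W a" and y: "y \<in> prod_of G W J"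
      have "\<forall>b\<in>(\<Union>j\<in>J. W j). b \<otimes> x = x \<otimes> b" using cm x by auto
      from comm_single[OF U _ this] y x Xa show "x \<otimes> y = y \<otimes> x"
        unfolding prod_of_def by auto
    qed
  qed
  finally show ?thesis .
qed

lemma indep:
  assumes sg: "\<forall>i\<in>I. subgroup (T i) G"
    and cm: "\<forall>i\<in>I. \<forall>j\<in>I. i \<noteq> j \<longrightarrow> (\<forall>x\<in>T i. \<forall>y\<in>T j. x \<otimes> y = y \<otimes> x)"
    and ind: "\<forall>i\<in>I. T i \<inter> prod_of G T (I - {i}) = {\<one>}"
    and fin: "finite A"
  shows "A \<subseteq> I \<Longrightarrow> C \<subseteq> I \<Longrightarrow> A \<inter> C = {} \<Longrightarrow> prod_of G T A \<inter> prod_of G T C = {\<one>}"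
  using fin
proof (induction A rule: finite_induct)
  case empty then show ?case unfolding prod_of_empty using prod_of_one[of T C] by blast
next
  case (insert a A)
  have aI: "a \<in> I" and AI: "A \<subseteq> I" and aC: "a \<notin> C" using insert by auto
  have cmT: "\<forall>j\<in>A. \<forall>x\<in>T a. \<forall>y\<in>T j. x \<otimes> y = y \<otimes> x"
  proof (intro ballI)
    fix j x y assume j: "j \<in> A" and x: "x \<in> T a" and y: "y \<in> T j"
    have "a \<noteq> j" "j \<in> I" using j AI insert.hyps(2) by auto
    then show "x \<otimes> y = y \<otimes> x" using cm aI x y by blast
  qed
  have sgA: "\<forall>j\<in>insert a A. subgroup (T j) G" using sg aI AI by blast
  have eq: "prod_of G T (insert a A) = T a <#> prod_of G T A"
    by (rule prod_of_insert[OF sgA cmT])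
  have IH: "prod_of G T A \<inter> prod_of G T C = {\<one>}" using insert by auto
  have sub: "subgroup (prod_of G T (I - {a})) G" using sg by (intro prod_of_subgroup) blast
  have "x = \<one>" if x1: "x \<in> prod_of G T (insert a A)" and x2: "x \<in> prod_of G T C" for x
  proof -
    from x1 eq obtain t y where t: "t \<in> T a" and y: "y \<in> prod_of G T A" and xe: "x = t \<otimes> y"
      by (auto elim: set_multE)
    have tc: "t \<in> carrier G" using t sg aI subgroup.subset by blast
    have yc: "y \<in> carrier G" using y prod_of_carrier[of A T] sg AI by blast
    have "t = x \<otimes> inv y" using xe tc yc by (simp add: m_assoc)
    moreover have "C \<subseteq> I - {a}" using insert.prems aC by blast
    then have "x \<in> prod_of G T (I - {a})"
      using x2 prod_of_mono[of C "I - {a}" T] by blast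
    moreover have "A \<subseteq> I - {a}" using AI insert.hyps(2) by blast
    then have "y \<in> prod_of G T (I - {a})"
      using y prod_of_mono[of A "I - {a}" T] by blast
    ultimately have "t \<in> prod_of G T (I - {a})"
      using subgroup.m_closed[OF sub _ subgroup.m_inv_closed[OF sub]] by simp
    moreover have "T a \<inter> prod_of G T (I - {a}) = {\<one>}" using ind aI by simp
    ultimately have "t = \<one>" using t by blast
    then have "x = y" using xe yc by simp
    then show "x = \<one>" using IH x2 y by blast
  qed
  then show ?case using prod_of_one by blast
qed

lemma diag_main:
  assumes finL: "finite L"
    and sD: "\<forall>j\<in>L. subgroup (D j) G" and sQ: "\<forall>j\<in>L. subgroup (Q j) G"
    and sP: "\<forall>j\<in>L. subgroup (P j) G"
    and DP: "\<forall>j\<in>L. D j \<subseteq> P j" and QP: "\<forall>j\<in>L. Q j \<subseteq> P j"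
    and DQ: "\<forall>j\<in>L. D j <#> Q j = P j"
    and DQi: "\<forall>j\<in>L. D j \<inter> Q j = {\<one>}"
    and cm: "\<forall>i\<in>L. \<forall>j\<in>L. i \<noteq> j \<longrightarrow> (\<forall>x\<in>P i. \<forall>y\<in>P j. x \<otimes> y = y \<otimes> x)"
    and ind: "\<forall>a\<in>L. \<forall>J. J \<subseteq> L \<longrightarrow> a \<notin> J \<longrightarrow> P a \<inter> prod_of G P J = {\<one>}"
    and JL: "J \<subseteq> L"
  shows "prod_of G D J <#> prod_of G Q J = prod_of G P J \<and> prod_of G D J \<inter> prod_of G Q J = {\<one>}"
proof -
  have "finite J" using finL JL finite_subset by blast
  then show ?thesis using JL
  proof (induction J rule: finite_induct)
    case empty
    show ?case unfolding prod_of_empty by (auto simp: set_mult_def)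
  next
    case (insert a J)
    have aL: "a \<in> L" and JL': "J \<subseteq> L" using insert by auto
    have IH: "prod_of G D J <#> prod_of G Q J = prod_of G P J"
      "prod_of G D J \<inter> prod_of G Q J = {\<one>}" using insert JL' by auto
    have cmP: "\<forall>j\<in>J. \<forall>x\<in>P a. \<forall>y\<in>P j. x \<otimes> y = y \<otimes> x"
    proof (intro ballI)
      fix j x y assume j: "j \<in> J" and x: "x \<in> P a" and y: "y \<in> P j"
      have "a \<noteq> j" "j \<in> L" using j JL' insert.hyps(2) by auto
      then show "x \<otimes> y = y \<otimes> x" using cm aL x y by blast
    qed
    have eqD: "prod_of G D (insert a J) = D a <#> prod_of G D J"
      by (rule prod_of_insert) (use sD aL JL' cmP DP in blast)+
    have eqQ: "prod_of G Q (insert a J) = Q a <#> prod_of G Q J"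
      by (rule prod_of_insert) (use sQ aL JL' cmP QP in blast)+
    have eqP: "prod_of G P (insert a J) = P a <#> prod_of G P J"
      by (rule prod_of_insert) (use sP aL JL' cmP in blast)+
    have PDP: "prod_of G D J \<subseteq> prod_of G P J" using DP JL' by (intro prod_of_mono2) blast
    have PQP: "prod_of G Q J \<subseteq> prod_of G P J" using QP JL' by (intro prod_of_mono2) blast
    have PPc: "prod_of G P J \<subseteq> carrier G" using sP JL' by (intro prod_of_carrier) blast
    have sPP: "subgroup (prod_of G P J) G" using sP JL' by (intro prod_of_subgroup) blast
    have Pac: "P a \<subseteq> carrier G" using sP aL subgroup.subset by blast
    have comm: "x \<otimes> y = y \<otimes> x" if x: "x \<in> P a" and y: "y \<in> prod_of G P J" for x y
    proof -
      have U: "(\<Union>j\<in>J. P j) \<subseteq> carrier G" using sP JL' subgroup.subset by blast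
      have "\<forall>b\<in>(\<Union>j\<in>J. P j). b \<otimes> x = x \<otimes> b" using cmP x by auto
      from comm_single[OF U _ this] y x Pac show "x \<otimes> y = y \<otimes> x"
        unfolding prod_of_def by auto
    qed
    have Dac: "D a \<subseteq> P a" "Q a \<subseteq> P a" using DP QP aL by auto
    have sPa: "subgroup (P a) G" using sP aL by blast
    show ?case
    proof
      show "prod_of G D (insert a J) <#> prod_of G Q (insert a J) = prod_of G P (insert a J)"
        unfolding eqD eqQ eqP
      proof
        show "D a <#> prod_of G D J <#> (Q a <#> prod_of G Q J) \<subseteq> P a <#> prod_of G P J"
        proof
          fix z assume "z \<in> D a <#> prod_of G D J <#> (Q a <#> prod_of G Q J)"
          then obtain d e q f where d: "d \<in> D a" and e: "e \<in> prod_of G D J" and q: "q \<in> Q a"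
            and f: "f \<in> prod_of G Q J" and z: "z = (d \<otimes> e) \<otimes> (q \<otimes> f)"
            by (auto elim!: set_multE)
          have c: "d \<in> carrier G" "e \<in> carrier G" "q \<in> carrier G" "f \<in> carrier G"
            using d e q f Dac Pac PDP PQP PPc by auto
          have "z = d \<otimes> (e \<otimes> q) \<otimes> f" using z c by (simp add: m_assoc)
          also have "\<dots> = d \<otimes> (q \<otimes> e) \<otimes> f" proof -
            have "q \<otimes> e = e \<otimes> q" using comm[of q e] q e Dac PDP by blast
            then show ?thesis by simp
          qed
          also have "\<dots> = (d \<otimes> q) \<otimes> (e \<otimes> f)" using c by (simp add: m_assoc)
          finally have z': "z = (d \<otimes> q) \<otimes> (e \<otimes> f)" .
          have "d \<otimes> q \<in> P a" using DQ aL set_multI[where G=G, OF d q] by blast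
          moreover have "e \<otimes> f \<in> prod_of G P J" using IH(1) set_multI[where G=G, OF e f] by blast
          ultimately show "z \<in> P a <#> prod_of G P J" using z' set_multI[where G=G] by metis
        qed
      next
        show "P a <#> prod_of G P J \<subseteq> D a <#> prod_of G D J <#> (Q a <#> prod_of G Q J)"
        proof
          fix z assume "z \<in> P a <#> prod_of G P J"
          then obtain p r where p: "p \<in> P a" and r: "r \<in> prod_of G P J" and z: "z = p \<otimes> r"
            by (auto elim!: set_multE)
          have "p \<in> D a <#> Q a" using p DQ aL by blast
          then obtain d q where d: "d \<in> D a" and q: "q \<in> Q a" and pe: "p = d \<otimes> q"
            by (rule set_multE)
          have "r \<in> prod_of G D J <#> prod_of G Q J" using r IH(1) by blast
          then obtain e f where e: "e \<in> prod_of G D J" and f: "f \<in> prod_of G Q J" and re: "r = e \<otimes> f"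
            by (rule set_multE)
          have c: "d \<in> carrier G" "e \<in> carrier G" "q \<in> carrier G" "f \<in> carrier G"
            using d e q f Dac Pac PDP PQP PPc by auto
          have "z = d \<otimes> (q \<otimes> e) \<otimes> f" using z pe re c by (simp add: m_assoc)
          also have "\<dots> = d \<otimes> (e \<otimes> q) \<otimes> f" proof -
            have "q \<otimes> e = e \<otimes> q" using comm[of q e] q e Dac PDP by blast
            then show ?thesis by simp
          qed
          also have "\<dots> = (d \<otimes> e) \<otimes> (q \<otimes> f)" using c by (simp add: m_assoc)
          finally show "z \<in> D a <#> prod_of G D J <#> (Q a <#> prod_of G Q J)"
            using set_multI[where G=G, OF set_multI[where G=G, OF d e] set_multI[where G=G, OF q f]]
            by simp
        qed
      qed
    next
      show "prod_of G D (insert a J) \<inter> prod_of G Q (insert a J) = {\<one>}"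
      proof -
        have "z = \<one>" if z1: "z \<in> prod_of G D (insert a J)" and z2: "z \<in> prod_of G Q (insert a J)" for z
        proof -
          from z1 eqD obtain d e where d: "d \<in> D a" and e: "e \<in> prod_of G D J" and ze: "z = d \<otimes> e"
            by (auto elim!: set_multE)
          from z2 eqQ obtain q f where q: "q \<in> Q a" and f: "f \<in> prod_of G Q J" and zf: "z = q \<otimes> f"
            by (auto elim!: set_multE)
          have c: "d \<in> carrier G" "e \<in> carrier G" "q \<in> carrier G" "f \<in> carrier G"
            using d e q f Dac Pac PDP PQP PPc by auto
          have eq1: "inv q \<otimes> d = f \<otimes> inv e"
          proof -
            have "d \<otimes> e = q \<otimes> f" using ze zf by simp
            have "inv q \<otimes> d = inv q \<otimes> (d \<otimes> e) \<otimes> inv e" using c by (simp add: m_assoc)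
            also have "\<dots> = inv q \<otimes> (q \<otimes> f) \<otimes> inv e" using \<open>d \<otimes> e = q \<otimes> f\<close> by simp
            also have "\<dots> = f \<otimes> inv e" using c by (simp add: m_assoc[symmetric])
            finally show ?thesis .
          qed
          have "inv q \<otimes> d \<in> P a" using subgroup.m_closed[OF sPa subgroup.m_inv_closed[OF sPa subsetD[OF Dac(2) q]] subsetD[OF Dac(1) d]] .
          moreover have "f \<otimes> inv e \<in> prod_of G P J"
            using subgroup.m_closed[OF sPP subsetD[OF PQP f] subgroup.m_inv_closed[OF sPP subsetD[OF PDP e]]] .
          moreover have "P a \<inter> prod_of G P J = {\<one>}" using ind aL JL' insert.hyps(2) by simp
          ultimately have "inv q \<otimes> d = \<one>" using eq1 by auto
          then have "q \<otimes> (inv q \<otimes> d) = q" using c by simp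
          then have dq: "d = q" using c by (simp add: m_assoc[symmetric])
          then have "d = \<one>" using DQi aL d q by blast
          then have "e = f" using ze zf dq c by simp
          then have "e = \<one>" using IH(2) e f by blast
          then show "z = \<one>" using ze \<open>d = \<one>\<close> by simp
        qed
        then show ?thesis using prod_of_one by blast
      qed
    qed
  qed
qed

end



context group
begin

lemma uniq_dec:
  assumes H: "subgroup H G" and K: "subgroup K G" and KH: "K \<inter> H = {\<one>}"
    and a: "a \<in> K" and b: "b \<in> K" and h: "h \<in> H" and c: "c \<in> H"
    and e: "a \<otimes> h = b \<otimes> c"
  shows "h = c \<and> a = b"
proof -
  have ca: "a \<in> carrier G" "b \<in> carrier G" "h \<in> carrier G" "c \<in> carrier G"
    using a b h c H K subgroup.subset by auto
  have "inv b \<otimes> a = inv b \<otimes> (a \<otimes> h) \<otimes> inv h" using ca by (simp add: m_assoc)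
  also have "\<dots> = inv b \<otimes> (b \<otimes> c) \<otimes> inv h" using e by simp
  also have "\<dots> = c \<otimes> inv h" using ca by (simp add: m_assoc[symmetric])
  finally have eq: "inv b \<otimes> a = c \<otimes> inv h" .
  have "inv b \<otimes> a \<in> K" using subgroup.m_closed[OF K subgroup.m_inv_closed[OF K b] a] .
  moreover have "c \<otimes> inv h \<in> H" using subgroup.m_closed[OF H c subgroup.m_inv_closed[OF H h]] .
  ultimately have "c \<otimes> inv h = \<one>" using eq KH by auto
  then have "c \<otimes> inv h \<otimes> h = h" using ca by simp
  then have hc: "h = c" using ca by (simp add: m_assoc)
  then have "a = b" using e ca by simp
  with hc show ?thesis by simp
qed

lemma perfect_from_complement:
  assumes H: "subgroup H G" and K: "subgroup K G" and KH: "K \<inter> H = {\<one>}"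
    and dec: "\<forall>g\<in>carrier G. \<exists>k\<in>K. \<exists>h\<in>H. g = k \<otimes> h"
  shows "subgroup_perfect_code G H"
proof -
  define S where "S = K - {\<one>}"
  have Kc: "K \<subseteq> carrier G" and Hc: "H \<subseteq> carrier G" using H K subgroup.subset by auto
  have S1: "S \<subseteq> carrier G - {\<one>}" using Kc unfolding S_def by auto
  have S2: "\<forall>s\<in>S. inv s \<in> S"
  proof
    fix s assume s: "s \<in> S"
    then have "s \<in> K" "s \<noteq> \<one>" "s \<in> carrier G" using Kc unfolding S_def by auto
    moreover have "inv s \<noteq> \<one>"
    proof
      assume "inv s = \<one>"
      then have "inv (inv s) = \<one>" by simp
      then show False using \<open>s \<noteq> \<one>\<close> \<open>s \<in> carrier G\<close> by simp
    qed
    ultimately show "inv s \<in> S" unfolding S_def using subgroup.m_inv_closed[OF K] by auto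
  qed
  have onek: "\<one> \<in> K" using K subgroup.one_closed by blast
  have indep: "\<not> cayley_adj G S x y" if x: "x \<in> H" and y: "y \<in> H" for x y
  proof
    assume "cayley_adj G S x y"
    then have "(\<exists>s\<in>S. y = s \<otimes> x) \<or> (\<exists>s\<in>S. x = s \<otimes> y)" unfolding cayley_adj_def by blast
    then obtain s u v where s: "s \<in> S" and u: "u \<in> H" and v: "v \<in> H" and e: "v = s \<otimes> u"
      using x y by blast
    have sK: "s \<in> K" "s \<noteq> \<one>" using s unfolding S_def by auto
    have "\<one> \<otimes> v = s \<otimes> u" using e v Hc by auto
    then have "\<one> = s" using uniq_dec[OF H K KH onek sK(1) v u] by blast
    then show False using sK by simp
  qed
  have uniq: "\<exists>!c. c \<in> H \<and> cayley_adj G S v c" if v: "v \<in> carrier G - H" for v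
  proof -
    obtain k h where k: "k \<in> K" and h: "h \<in> H" and ve: "v = k \<otimes> h" using dec v by blast
    have "k \<noteq> \<one>" using ve h v Hc by auto
    then have kS: "k \<in> S" using k unfolding S_def by auto
    have adj: "cayley_adj G S v h" unfolding cayley_adj_def using v h Hc kS ve by blast
    have "c = h" if c: "c \<in> H" and ac: "cayley_adj G S v c" for c
    proof -
      have "(\<exists>s\<in>S. c = s \<otimes> v) \<or> (\<exists>s\<in>S. v = s \<otimes> c)" using ac unfolding cayley_adj_def by blast
      then show "c = h"
      proof
        assume "\<exists>s\<in>S. c = s \<otimes> v"
        then obtain s where s: "s \<in> S" "c = s \<otimes> v" by blast
        have sK: "s \<in> K" using s unfolding S_def by auto
        have cs: "s \<in> carrier G" "k \<in> carrier G" "h \<in> carrier G" "c \<in> carrier G"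
          using sK k h c Kc Hc by auto
        have "\<one> \<otimes> c = (s \<otimes> k) \<otimes> h" using s ve cs by (simp add: m_assoc)
        then show "c = h"
          using uniq_dec[OF H K KH onek subgroup.m_closed[OF K sK k] c h] by simp
      next
        assume "\<exists>s\<in>S. v = s \<otimes> c"
        then obtain s where s: "s \<in> S" "v = s \<otimes> c" by blast
        have sK: "s \<in> K" using s unfolding S_def by auto
        have "k \<otimes> h = s \<otimes> c" using s ve by simp
        then show "c = h" using uniq_dec[OF H K KH k sK h c] by simp
      qed
    qed
    then show ?thesis using adj h by blast
  qed
  have "perfect_code_graph (carrier G) (cayley_adj G S) H"
    unfolding perfect_code_graph_def using Hc indep uniq by blast
  then show ?thesis unfolding subgroup_perfect_code_def using H S1 S2 by blast
qed

end

lemma final_step: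
  fixes G (structure)
  assumes act: "group_action G \<Omega> \<phi>" and al: "\<alpha> \<in> \<Omega>"
    and qp: "quasiprimitive G \<Omega> \<phi>"
    and N: "N \<lhd> G" and Nt: "N \<noteq> {\<one>\<^bsub>G\<^esub>}"
    and K: "subgroup K G" and KN: "K \<subseteq> N"
    and eq: "(N \<inter> stabilizer G \<phi> \<alpha>) <#>\<^bsub>G\<^esub> K = N"
    and int: "(N \<inter> stabilizer G \<phi> \<alpha>) \<inter> K = {\<one>\<^bsub>G\<^esub>}"
  shows "subgroup_perfect_code G (stabilizer G \<phi> \<alpha>)"
proof -
  interpret group_action G \<Omega> \<phi> by (rule act)
  interpret group G using group_hom group_hom.axioms(1) by blast
  let ?H = "stabilizer G \<phi> \<alpha>"
  have H: "subgroup ?H G" by (rule stabilizer_subgroup[OF al])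
  have sN: "subgroup N G" using N normal_imp_subgroup by blast
  have tr: "\<forall>x\<in>\<Omega>. \<forall>y\<in>\<Omega>. \<exists>g\<in>N. \<phi> g x = y" using qp N Nt unfolding quasiprimitive_def by blast
  have KH: "K \<inter> ?H = {\<one>}" using int KN subgroup.one_closed[OF K] subgroup.one_closed[OF H] by blast
  have dec: "\<forall>g\<in>carrier G. \<exists>k\<in>K. \<exists>h\<in>?H. g = k \<otimes> h"
  proof
    fix g assume g: "g \<in> carrier G"
    have be: "\<phi> g \<alpha> \<in> \<Omega>" using element_image[OF g al] by blast
    obtain n where n: "n \<in> N" and ne: "\<phi> n \<alpha> = \<phi> g \<alpha>" using tr al be by blast
    have nc: "n \<in> carrier G" using n sN subgroup.subset by blast
    have "\<phi> (inv n \<otimes> g) \<alpha> = \<phi> (inv n) (\<phi> g \<alpha>)" using composition_rule[OF al _ g] nc by simp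
    also have "\<dots> = \<alpha>" using orbit_sym_aux[OF nc al ne] .
    finally have hH: "inv n \<otimes> g \<in> ?H" unfolding stabilizer_def using nc g by simp
    have "inv n \<in> N" using subgroup.m_inv_closed[OF sN n] .
    then have "inv n \<in> (N \<inter> ?H) <#> K" using eq by simp
    then obtain d k where d: "d \<in> N \<inter> ?H" and k: "k \<in> K" and de: "inv n = d \<otimes> k"
      by (rule set_multE)
    have cs: "d \<in> carrier G" "k \<in> carrier G" using d k sN K subgroup.subset by auto
    have "n = inv (d \<otimes> k)" using de nc by (metis inv_inv)
    also have "\<dots> = inv k \<otimes> inv d" using cs by (simp add: inv_mult_group)
    finally have nn: "n = inv k \<otimes> inv d" .
    have "g = n \<otimes> (inv n \<otimes> g)" using nc g by (simp add: m_assoc[symmetric])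
    also have "\<dots> = inv k \<otimes> (inv d \<otimes> (inv n \<otimes> g))" using nn cs nc g by (simp add: m_assoc)
    finally have "g = inv k \<otimes> (inv d \<otimes> (inv n \<otimes> g))" .
    moreover have "inv k \<in> K" using subgroup.m_inv_closed[OF K k] .
    moreover have "inv d \<otimes> (inv n \<otimes> g) \<in> ?H"
      using subgroup.m_closed[OF H subgroup.m_inv_closed[OF H] hH] d by blast
    ultimately show "\<exists>k\<in>K. \<exists>h\<in>?H. g = k \<otimes> h" by blast
  qed
  show ?thesis by (rule perfect_from_complement[OF H K KH dec])
qed



context group
begin

lemma socle_normal: "socle G \<lhd> G"
  unfolding socle_def
proof (rule normal_generateI)
  show "\<Union>{N. minimal_normal G N} \<subseteq> carrier G"
  proof
    fix x assume "x \<in> \<Union>{N. minimal_normal G N}"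
    then obtain M where M: "minimal_normal G M" "x \<in> M" by blast
    then have "M \<lhd> G" unfolding minimal_normal_def by blast
    then have "subgroup M G" by (rule normal_imp_subgroup)
    then show "x \<in> carrier G" using subgroup.subset M(2) by blast
  qed
next
  fix h g assume h: "h \<in> \<Union>{N. minimal_normal G N}" and g: "g \<in> carrier G"
  then obtain M where M: "minimal_normal G M" "h \<in> M" by blast
  then have "M \<lhd> G" unfolding minimal_normal_def by blast
  then have "g \<otimes> h \<otimes> inv g \<in> M" by (rule normal.inv_op_closed2[OF _ g M(2)])
  then show "g \<otimes> h \<otimes> inv g \<in> \<Union>{N. minimal_normal G N}" using M by blast
qed

lemma nontriv:
  assumes "A \<subseteq> N" and "nonabelian_simple_subgroup G A"
  shows "N \<noteq> {\<one>}"
proof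
  assume "N = {\<one>}"
  then have "A \<subseteq> {\<one>}" using assms by blast
  moreover obtain x y where "x \<in> A" "y \<in> A" "x \<otimes> y \<noteq> y \<otimes> x"
    using assms(2) unfolding nonabelian_simple_subgroup_def by blast
  ultimately show False by auto
qed

lemma SD_complement:
  assumes sd: "type_SD G \<Omega> \<phi>" and al: "\<alpha> \<in> \<Omega>"
  shows "\<exists>K. subgroup K G \<and> K \<subseteq> socle G \<and> socle G \<noteq> {\<one>} \<and>
     (socle G \<inter> stabilizer G \<phi> \<alpha>) <#> K = socle G \<and>
     (socle G \<inter> stabilizer G \<phi> \<alpha>) \<inter> K = {\<one>}"
proof -
  obtain k :: nat and T where k: "k \<ge> 2" and ns: "\<forall>i<k. nonabelian_simple_subgroup G (T i)"
    and idp: "internal_dir_prod G T {..<k} (socle G)"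
    and fd: "full_diagonal G T {..<k} (socle G \<inter> stabilizer G \<phi> \<alpha>)"
    using sd unfolding type_SD_def by (elim exE conjE) (rule that; (assumption | blast intro: al))
  have Neq: "socle G = prod_of G T {..<k}" using idp unfolding internal_dir_prod_def by blast
  have sg: "\<forall>i\<in>{..<k}. subgroup (T i) G" using idp unfolding internal_dir_prod_def by blast
  have k0: "0 \<in> {..<k}" using k by simp
  define K where "K = prod_of G T ({..<k} - {0})"
  have K: "subgroup K G" unfolding K_def using sg by (intro prod_of_subgroup) blast
  have KN: "K \<subseteq> socle G" unfolding K_def Neq by (rule prod_of_mono) blast
  have T0: "T 0 \<subseteq> socle G" unfolding Neq using prod_of_incl[OF k0] .
  have nt: "socle G \<noteq> {\<one>}" using nontriv[OF T0] ns k by simp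
  have "(socle G \<inter> stabilizer G \<phi> \<alpha>) \<inter> K = {\<one>}"
    "(socle G \<inter> stabilizer G \<phi> \<alpha>) <#> K = socle G"
    using fd k0 unfolding full_diagonal_def K_def Neq by blast+
  then show ?thesis using K KN nt by blast
qed

lemma CD_complement:
  assumes cd: "type_CD G \<Omega> \<phi>" and al: "\<alpha> \<in> \<Omega>"
  shows "\<exists>K. subgroup K G \<and> K \<subseteq> socle G \<and> socle G \<noteq> {\<one>} \<and>
     (socle G \<inter> stabilizer G \<phi> \<alpha>) <#> K = socle G \<and>
     (socle G \<inter> stabilizer G \<phi> \<alpha>) \<inter> K = {\<one>}"
proof -
  obtain k :: nat and T where ns: "\<forall>i<k. nonabelian_simple_subgroup G (T i)"
    and idp: "internal_dir_prod G T {..<k} (socle G)"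
    and rest: "\<forall>\<alpha>\<in>\<Omega>. \<exists>l::nat. \<exists>B::nat \<Rightarrow> nat set. \<exists>D::nat \<Rightarrow> 'a set.
            l \<ge> 2 \<and> l dvd k \<and> k div l \<ge> 2 \<and>
            (\<forall>j<l. B j \<subseteq> {..<k} \<and> card (B j) = k div l) \<and>
            (\<forall>j<l. \<forall>j'<l. j \<noteq> j' \<longrightarrow> B j \<inter> B j' = {}) \<and>
            (\<Union>j<l. B j) = {..<k} \<and>
            (\<forall>j<l. full_diagonal G T (B j) (D j)) \<and>
            socle G \<inter> stabilizer G \<phi> \<alpha> = prod_of G D {..<l}"
    using cd unfolding type_CD_def by (elim exE conjE) (rule that; assumption)
  obtain l B D where l: "l \<ge> 2" "l dvd k" "k div l \<ge> 2"
    and Bk: "\<forall>j<l. B j \<subseteq> {..<k} \<and> card (B j) = k div l"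
    and Bd: "\<forall>j<l. \<forall>j'<l. j \<noteq> j' \<longrightarrow> B j \<inter> B j' = {}"
    and Bu: "(\<Union>j<l. B j) = {..<k}"
    and fd: "\<forall>j<l. full_diagonal G T (B j) (D j)"
    and Ns: "socle G \<inter> stabilizer G \<phi> \<alpha> = prod_of G D {..<l}"
    using rest[rule_format, OF al] by (elim exE conjE) (rule that; assumption)
  have Neq: "socle G = prod_of G T {..<k}" using idp unfolding internal_dir_prod_def by blast
  have sg: "\<forall>i\<in>{..<k}. subgroup (T i) G" using idp unfolding internal_dir_prod_def by blast
  have cmT: "\<forall>i\<in>{..<k}. \<forall>j\<in>{..<k}. i \<noteq> j \<longrightarrow> (\<forall>x\<in>T i. \<forall>y\<in>T j. x \<otimes> y = y \<otimes> x)"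
    using idp unfolding internal_dir_prod_def by blast
  have indT: "\<forall>i\<in>{..<k}. T i \<inter> prod_of G T ({..<k} - {i}) = {\<one>}"
    using idp unfolding internal_dir_prod_def by blast
  have k0: "0 < k"
  proof (rule ccontr)
    assume "\<not> 0 < k" then have "k = 0" by simp
    then show False using l(3) by simp
  qed
  have Bne: "B j \<noteq> {}" if "j < l" for j
  proof
    assume "B j = {}"
    then have "card (B j) = 0" by simp
    then show False using Bk that l(3) by simp
  qed
  define c where "c j = (SOME i. i \<in> B j)" for j
  have cB: "c j \<in> B j" if "j < l" for j
    unfolding c_def using Bne[OF that] by (simp add: some_in_eq)
  define P where "P j = prod_of G T (B j)" for j
  define Q where "Q j = prod_of G T (B j - {c j})" for j
  have sgB: "\<forall>i\<in>B j. subgroup (T i) G" if "j < l" for j using sg Bk that by blast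
  have sgA: "subgroup (prod_of G T A) G" if "A \<subseteq> {..<k}" for A
    by (rule prod_of_subgroup) (use sg that in blast)
  have BjK: "B j \<subseteq> {..<k}" if "j < l" for j using Bk that by blast
  have sPj: "subgroup (P j) G" if "j < l" for j unfolding P_def using sgA BjK that by blast
  have sQj: "subgroup (Q j) G" if "j < l" for j unfolding Q_def using sgA BjK that by blast
  have QPj: "Q j \<subseteq> P j" for j unfolding Q_def P_def by (rule prod_of_mono) blast
  have fdj: "D j \<inter> Q j = {\<one>} \<and> D j <#> Q j = P j \<and> D j \<subseteq> P j \<and> subgroup (D j) G" if "j < l" for j
  proof -
    have "full_diagonal G T (B j) (D j)" using fd that by blast
    then show ?thesis using cB[OF that] unfolding full_diagonal_def P_def Q_def by blast
  qed
  have main: "prod_of G D {..<l} <#> prod_of G Q {..<l} = prod_of G P {..<l} \<and>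
      prod_of G D {..<l} \<inter> prod_of G Q {..<l} = {\<one>}"
  proof (rule diag_main)
    show "finite {..<l}" by simp
    show "{..<l} \<subseteq> {..<l}" by simp
    show "\<forall>j\<in>{..<l}. subgroup (D j) G" using fdj by blast
    show "\<forall>j\<in>{..<l}. subgroup (Q j) G" using sQj by blast
    show "\<forall>j\<in>{..<l}. subgroup (P j) G" using sPj by blast
    show "\<forall>j\<in>{..<l}. D j \<subseteq> P j" using fdj by blast
    show "\<forall>j\<in>{..<l}. Q j \<subseteq> P j" using QPj by blast
    show "\<forall>j\<in>{..<l}. D j <#> Q j = P j" using fdj by blast
    show "\<forall>j\<in>{..<l}. D j \<inter> Q j = {\<one>}" using fdj by blast
    show "\<forall>i\<in>{..<l}. \<forall>j\<in>{..<l}. i \<noteq> j \<longrightarrow> (\<forall>x\<in>P i. \<forall>y\<in>P j. x \<otimes> y = y \<otimes> x)"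
    proof (intro ballI impI)
      fix i j x y assume i: "i \<in> {..<l}" and j: "j \<in> {..<l}" and ij: "i \<noteq> j"
        and x: "x \<in> P i" and y: "y \<in> P j"
      have A: "(\<Union>p\<in>B i. T p) \<subseteq> carrier G" using sgB[of i] i subgroup.subset by blast
      have B: "(\<Union>p\<in>B j. T p) \<subseteq> carrier G" using sgB[of j] j subgroup.subset by blast
      have C: "\<forall>a\<in>(\<Union>p\<in>B i. T p). \<forall>b\<in>(\<Union>p\<in>B j. T p). a \<otimes> b = b \<otimes> a"
      proof (intro ballI)
        fix a b assume "a \<in> (\<Union>p\<in>B i. T p)" "b \<in> (\<Union>p\<in>B j. T p)"
        then obtain p q where p: "p \<in> B i" "a \<in> T p" and q: "q \<in> B j" "b \<in> T q" by blast
        have "p \<noteq> q" using Bd i j ij p q by blast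
        moreover have "p \<in> {..<k}" "q \<in> {..<k}" using Bk i j p q by blast+
        ultimately show "a \<otimes> b = b \<otimes> a" using cmT p q by blast
      qed
      show "x \<otimes> y = y \<otimes> x" using gen_commute[OF A B C, of x y] x y unfolding P_def prod_of_def by simp
    qed
    show "\<forall>a\<in>{..<l}. \<forall>J. J \<subseteq> {..<l} \<longrightarrow> a \<notin> J \<longrightarrow> P a \<inter> prod_of G P J = {\<one>}"
    proof (intro ballI allI impI)
      fix a J assume a: "a \<in> {..<l}" and J: "J \<subseteq> {..<l}" and aJ: "a \<notin> J"
      define C where "C = (\<Union>j\<in>J. B j)"
      have CI: "C \<subseteq> {..<k}" using Bk J unfolding C_def by blast
      have sC: "subgroup (prod_of G T C) G" using sg CI by (intro prod_of_subgroup) blast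
      have "prod_of G P J \<subseteq> prod_of G T C"
        unfolding prod_of_def[of G P J]
      proof (rule generate_subgroup_incl[OF _ sC])
        show "(\<Union>j\<in>J. P j) \<subseteq> prod_of G T C"
        proof
          fix x assume "x \<in> (\<Union>j\<in>J. P j)"
          then obtain j where j: "j \<in> J" "x \<in> P j" by blast
          have "B j \<subseteq> C" using j unfolding C_def by blast
          then show "x \<in> prod_of G T C" using prod_of_mono[of "B j" C T] j unfolding P_def by blast
        qed
      qed
      moreover have "prod_of G T (B a) \<inter> prod_of G T C = {\<one>}"
      proof (rule indep[OF sg cmT indT])
        show "finite (B a)" using Bk a finite_subset by blast
        show "B a \<subseteq> {..<k}" using Bk a by blast
        show "C \<subseteq> {..<k}" by (rule CI)
        show "B a \<inter> C = {}" unfolding C_def using Bd a J aJ by blast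
      qed
      ultimately show "P a \<inter> prod_of G P J = {\<one>}"
        using P_def[of a] prod_of_one[of T "B a"] prod_of_one[of P J] by blast
    qed
  qed
  have PN: "prod_of G P {..<l} = socle G"
  proof
    have sN: "subgroup (prod_of G T {..<k}) G" using sg by (intro prod_of_subgroup) blast
    show "prod_of G P {..<l} \<subseteq> socle G" unfolding Neq prod_of_def[of G P]
    proof (rule generate_subgroup_incl[OF _ sN])
      show "(\<Union>j\<in>{..<l}. P j) \<subseteq> prod_of G T {..<k}"
      proof
        fix x assume "x \<in> (\<Union>j\<in>{..<l}. P j)"
        then obtain j where j: "j < l" "x \<in> P j" by blast
        have "B j \<subseteq> {..<k}" using j Bk by blast
        then show "x \<in> prod_of G T {..<k}" using prod_of_mono[of "B j" "{..<k}" T] j unfolding P_def by blast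
      qed
    qed
    have sP: "subgroup (prod_of G P {..<l}) G" by (rule prod_of_subgroup) (use sPj in blast)
    show "socle G \<subseteq> prod_of G P {..<l}" unfolding Neq prod_of_def[of G T]
    proof (rule generate_subgroup_incl[OF _ sP])
      show "(\<Union>i\<in>{..<k}. T i) \<subseteq> prod_of G P {..<l}"
      proof
        fix x assume "x \<in> (\<Union>i\<in>{..<k}. T i)"
        then obtain i where i: "i < k" "x \<in> T i" by blast
        then obtain j where j: "j < l" "i \<in> B j" using Bu by blast
        have "x \<in> P j" unfolding P_def using prod_of_incl[OF j(2)] i by blast
        then show "x \<in> prod_of G P {..<l}" using prod_of_incl[of j "{..<l}" P] j by blast
      qed
    qed
  qed
  define K where "K = prod_of G Q {..<l}"
  have K: "subgroup K G" unfolding K_def by (rule prod_of_subgroup) (use sQj in blast)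
  have "K \<subseteq> prod_of G P {..<l}" unfolding K_def
    by (rule prod_of_mono2) (use QPj in blast)
  then have KN: "K \<subseteq> socle G" using PN by simp
  have T0: "T 0 \<subseteq> socle G" unfolding Neq using prod_of_incl[of 0 "{..<k}" T] k0 by simp
  have nt: "socle G \<noteq> {\<one>}" using nontriv[OF T0] ns k0 by simp
  have e1: "(socle G \<inter> stabilizer G \<phi> \<alpha>) <#> K = socle G"
    using main PN unfolding Ns K_def by simp
  have e2: "(socle G \<inter> stabilizer G \<phi> \<alpha>) \<inter> K = {\<one>}"
    using main unfolding Ns K_def by simp
  show ?thesis by (rule exI[of _ K]) (intro conjI K KN nt e1 e2)
qed

end


theorem lemma5p3:
  fixes G :: "('g, 'b) monoid_scheme" and \<Omega> :: "'c set" and \<phi> :: "'g \<Rightarrow> 'c \<Rightarrow> 'c"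
    and \<alpha> :: 'c
  assumes "faithful_action G \<Omega> \<phi>"
    and "finite \<Omega>"
    and "finite (carrier G)"
    and "quasiprimitive G \<Omega> \<phi>"
    and "type_SD G \<Omega> \<phi> \<or> type_CD G \<Omega> \<phi>"
    and "\<alpha> \<in> \<Omega>"
  shows "subgroup_perfect_code G (stabilizer G \<phi> \<alpha>)"
proof -
  have act: "group_action G \<Omega> \<phi>" using assms(1) faithful_action.axioms(1) by blast
  interpret group G using act group_action.group_hom group_hom.axioms(1) by blast
  have "\<exists>K. subgroup K G \<and> K \<subseteq> socle G \<and> socle G \<noteq> {\<one>\<^bsub>G\<^esub>} \<and>
     (socle G \<inter> stabilizer G \<phi> \<alpha>) <#>\<^bsub>G\<^esub> K = socle G \<and>
     (socle G \<inter> stabilizer G \<phi> \<alpha>) \<inter> K = {\<one>\<^bsub>G\<^esub>}"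
    using assms(5)
  proof
    assume "type_SD G \<Omega> \<phi>" then show ?thesis by (rule SD_complement[OF _ assms(6)])
  next
    assume "type_CD G \<Omega> \<phi>" then show ?thesis by (rule CD_complement[OF _ assms(6)])
  qed
  then obtain K where K: "subgroup K G" "K \<subseteq> socle G" "socle G \<noteq> {\<one>\<^bsub>G\<^esub>}"
    "(socle G \<inter> stabilizer G \<phi> \<alpha>) <#>\<^bsub>G\<^esub> K = socle G"
    "(socle G \<inter> stabilizer G \<phi> \<alpha>) \<inter> K = {\<one>\<^bsub>G\<^esub>}" by blast
  show ?thesis by (rule final_step[OF act assms(6) assms(4) socle_normal K(3) K(1) K(2) K(4) K(5)])
qed

end
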